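(* For every $\mathcal{ALC}$-formula $\varphi$, $\varphi\equiv\varphi^\dagger$, where $$\varphi^\dagger=\bigvee_{(T,o,f)\in\mathrm{QM}(\varphi)}\Big(\bigwedge_{\alpha\in f}\alpha\ \wedge\bigwedge_{\neg\alpha\in f}\neg\alpha\Big),$$ with $\alpha$ ranging over atomic formulae (of the form $(C=\top)$, $C(a)$, $r(a,b)$).
   Context: $\mathcal{ALC}$ concepts: $C::=A\mid\neg C\mid(C\sqcap C)\mid\exists r.C$ ($A$ concept name, $r$ role name). $\mathcal{ALC}$-formulae: $\phi::=\alpha\mid\neg\phi\mid(\phi\wedge\phi)$, atomic $\alpha::=C(a)\mid r(a,b)\mid(C=\top)$ ($a,b$ individual names); $\neg\neg\psi$ is identified with $\psi$; an empty disjunction is $\bot$. Interpretations $I=(\Delta^I,\cdot^I)$ with countable nonempty domain and standard semantics ($I\models(C=\top)$ iff $C^I=\Delta^I$, etc.); $\varphi\equiv\psi$ means both have the same models. $\mathrm{Sub}(\alpha)=\mathrm{Sub}(\neg\alpha)=\{\alpha,\neg\alpha\}$ for atomic $\alpha$; $\mathrm{Sub}(\psi\wedge\psi')=\mathrm{Sub}(\neg(\psi\wedge\psi'))=\{\psi\wedge\psi',\neg(\psi\wedge\psi')\}\cup\mathrm{Sub}(\psi)\cup\mathrm{Sub}(\psi')$. $\mathrm{con}(\varphi)$ is the smallest set of concepts containing $C$ whenever $(C=\top)\in\mathrm{Sub}(\varphi)$ or $C(a)\in\mathrm{Sub}(\varphi)$, containing $C,D$ when it contains $C\sqcap D$, containing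 $C$ when it contains $\exists r.C$, and closed under single negation. $\mathrm{ind}(\varphi)$: individual names in $\varphi$. Concept type for $\varphi$: $c\subseteq\mathrm{con}(\varphi)$ with $D\in c$ iff $\neg D\notin c$ ($D\in\mathrm{con}(\varphi)$) and $D\sqcap E\in c$ iff $\{D,E\}\subseteq c$ ($D\sqcap E\in\mathrm{con}(\varphi)$). Formula type for $\varphi$: $f\subseteq\mathrm{Sub}(\varphi)$ with $\psi\in f$ iff $\neg\psi\notin f$ ($\psi\in\mathrm{Sub}(\varphi)$) and $\psi\wedge\psi'\in f$ iff $\{\psi,\psi'\}\subseteq f$. Model candidate: $(T,o,f)$, $T$ a set of concept types, $o:\mathrm{ind}(\varphi)\to T$, $f$ a formula type, with $\varphi\in f$; $C(a)\in f\Rightarrow C\in o(a)$; $r(a,b)\in f\Rightarrow\{\neg C\mid\neg\exists r.C\in o(a)\}\subseteq o(b)$. Quasimodel for $\varphi$: a model candidate such that for every $c\in T$ and $\exists r.D\in c$ some $c'\in T$ contains $\{D\}\cup\{\neg E\mid\neg\exists r.E\in c\}$; for every $c\in T$ and concept $C$, $\neg C\in c$ implies $(C=\top)\notin f$; for every concept $C$, $\neg(C=\top)\in f$ implies some $c\in T$ has $C\notin c$; $T\neq\emptyset$. $\mathrm{QM}(\varphi)$ is the set of all quasimodels for $\varphi$. *)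

theory Defs
  imports Main "HOL-Library.Countable_Set"
begin

type_synonym cname = nat
type_synonym rname = nat
type_synonym iname = nat

datatype concept =
    CName cname
  | CNot concept
  | CAnd concept concept
  | CEx rname concept

datatype formula =
    CAss concept iname
  | RAss rname iname iname
  | CTop concept
  | FNot formula
  | FAnd formula formula

fun atomic :: "formula \<Rightarrow> bool" where
  "atomic (CAss C a) = True"
| "atomic (RAss r a b) = True"
| "atomic (CTop C) = True"
| "atomic _ = False"

record 'd interp =
  dom :: "'d set"
  cint :: "cname \<Rightarrow> 'd set"
  rint :: "rname \<Rightarrow> ('d \<times> 'd) set"
  iint :: "iname \<Rightarrow> 'd"

definition wf_interp :: "'d interp \<Rightarrow> bool" where
  "wf_interp I \<longleftrightarrow> dom I \<noteq> {} \<and> countable (dom I)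
     \<and> (\<forall>A. cint I A \<subseteq> dom I) \<and> (\<forall>r. rint I r \<subseteq> dom I \<times> dom I)
     \<and> (\<forall>a. iint I a \<in> dom I)"

fun cext :: "'d interp \<Rightarrow> concept \<Rightarrow> 'd set" where
  "cext I (CName A) = cint I A"
| "cext I (CNot C) = dom I - cext I C"
| "cext I (CAnd C D) = cext I C \<inter> cext I D"
| "cext I (CEx r C) = {x \<in> dom I. \<exists>y. (x, y) \<in> rint I r \<and> y \<in> cext I C}"

fun sat :: "'d interp \<Rightarrow> formula \<Rightarrow> bool" where
  "sat I (CAss C a) = (iint I a \<in> cext I C)"
| "sat I (RAss r a b) = ((iint I a, iint I b) \<in> rint I r)"
| "sat I (CTop C) = (cext I C = dom I)"
| "sat I (FNot \<phi>) = (\<not> sat I \<phi>)"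
| "sat I (FAnd \<phi> \<psi>) = (sat I \<phi> \<and> sat I \<psi>)"

fun fneg :: "formula \<Rightarrow> formula" where
  "fneg (FNot \<psi>) = \<psi>"
| "fneg \<psi> = FNot \<psi>"

fun cneg :: "concept \<Rightarrow> concept" where
  "cneg (CNot C) = C"
| "cneg C = CNot C"

text \<open>Normal form of a formula: double negations removed
 (realises the identification of \<open>\<not>\<not>\<psi>\<close> with \<open>\<psi>\<close>).\<close>
fun fnf :: "formula \<Rightarrow> formula" where
  "fnf (FNot \<psi>) = fneg (fnf \<psi>)"
| "fnf (FAnd \<psi> \<chi>) = FAnd (fnf \<psi>) (fnf \<chi>)"
| "fnf \<psi> = \<psi>"

fun Sub0 :: "formula \<Rightarrow> formula set" where
  "Sub0 (FNot \<psi>) = Sub0 \<psi>"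
| "Sub0 (FAnd \<psi> \<chi>) = {FAnd \<psi> \<chi>, FNot (FAnd \<psi> \<chi>)} \<union> Sub0 \<psi> \<union> Sub0 \<chi>"
| "Sub0 \<alpha> = {\<alpha>, FNot \<alpha>}"

definition Sub :: "formula \<Rightarrow> formula set" where
  "Sub \<phi> = Sub0 (fnf \<phi>)"

inductive_set con :: "formula \<Rightarrow> concept set" for \<phi> :: formula where
  con_top: "CTop C \<in> Sub \<phi> \<Longrightarrow> C \<in> con \<phi>"
| con_ass: "CAss C a \<in> Sub \<phi> \<Longrightarrow> C \<in> con \<phi>"
| con_and1: "CAnd C D \<in> con \<phi> \<Longrightarrow> C \<in> con \<phi>"
| con_and2: "CAnd C D \<in> con \<phi> \<Longrightarrow> D \<in> con \<phi>"
| con_ex: "CEx r C \<in> con \<phi> \<Longrightarrow> C \<in> con \<phi>"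
| con_neg: "C \<in> con \<phi> \<Longrightarrow> cneg C \<in> con \<phi>"

fun ind :: "formula \<Rightarrow> iname set" where
  "ind (CAss C a) = {a}"
| "ind (RAss r a b) = {a, b}"
| "ind (CTop C) = {}"
| "ind (FNot \<psi>) = ind \<psi>"
| "ind (FAnd \<psi> \<chi>) = ind \<psi> \<union> ind \<chi>"

definition concept_type :: "formula \<Rightarrow> concept set \<Rightarrow> bool" where
  "concept_type \<phi> c \<longleftrightarrow> c \<subseteq> con \<phi>
     \<and> (\<forall>D \<in> con \<phi>. D \<in> c \<longleftrightarrow> cneg D \<notin> c)
     \<and> (\<forall>D E. CAnd D E \<in> con \<phi> \<longrightarrow> (CAnd D E \<in> c \<longleftrightarrow> D \<in> c \<and> E \<in> c))"

definition formula_type :: "formula \<Rightarrow> formula set \<Rightarrow> bool" where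
  "formula_type \<phi> f \<longleftrightarrow> f \<subseteq> Sub \<phi>
     \<and> (\<forall>\<psi> \<in> Sub \<phi>. \<psi> \<in> f \<longleftrightarrow> fneg \<psi> \<notin> f)
     \<and> (\<forall>\<psi> \<chi>. FAnd \<psi> \<chi> \<in> Sub \<phi> \<longrightarrow> (FAnd \<psi> \<chi> \<in> f \<longleftrightarrow> \<psi> \<in> f \<and> \<chi> \<in> f))"

text \<open>The map \<open>o\<close> is defined on \<open>ind \<phi>\<close> only;
 we represent it as a total function that is \<open>{}\<close> outside \<open>ind \<phi>\<close>.\<close>
definition model_candidate ::
  "formula \<Rightarrow> concept set set \<Rightarrow> (iname \<Rightarrow> concept set) \<Rightarrow> formula set \<Rightarrow> bool" where
  "model_candidate \<phi> T ob f \<longleftrightarrow>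
     (\<forall>c \<in> T. concept_type \<phi> c)
     \<and> (\<forall>a \<in> ind \<phi>. ob a \<in> T) \<and> (\<forall>a. a \<notin> ind \<phi> \<longrightarrow> ob a = {})
     \<and> formula_type \<phi> f
     \<and> fnf \<phi> \<in> f
     \<and> (\<forall>C a. CAss C a \<in> f \<longrightarrow> C \<in> ob a)
     \<and> (\<forall>r a b. RAss r a b \<in> f \<longrightarrow> {cneg C | C. CNot (CEx r C) \<in> ob a} \<subseteq> ob b)"

definition quasimodel ::
  "formula \<Rightarrow> concept set set \<Rightarrow> (iname \<Rightarrow> concept set) \<Rightarrow> formula set \<Rightarrow> bool" where
  "quasimodel \<phi> T ob f \<longleftrightarrow>
     model_candidate \<phi> T ob f
     \<and> (\<forall>c \<in> T. \<forall>r D. CEx r D \<in> c \<longrightarrow>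
          (\<exists>c' \<in> T. {D} \<union> {cneg E | E. CNot (CEx r E) \<in> c} \<subseteq> c'))
     \<and> (\<forall>c \<in> T. \<forall>C. cneg C \<in> c \<longrightarrow> CTop C \<notin> f)
     \<and> (\<forall>C. FNot (CTop C) \<in> f \<longrightarrow> (\<exists>c \<in> T. C \<notin> c))
     \<and> T \<noteq> {}"

definition QM :: "formula \<Rightarrow> (concept set set \<times> (iname \<Rightarrow> concept set) \<times> formula set) set" where
  "QM \<phi> = {(T, ob, f). quasimodel \<phi> T ob f}"

text \<open>A fixed unsatisfiable formula \<open>\<bottom>\<close> (the empty disjunction) and \<open>\<top> = \<not>\<bottom>\<close>.\<close>
definition fbot :: formula where
  "fbot = CTop (CAnd (CName 0) (CNot (CName 0)))"

definition ftop :: formula where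
  "ftop = FNot fbot"

fun bigconj :: "formula list \<Rightarrow> formula" where
  "bigconj [] = ftop"
| "bigconj [\<psi>] = \<psi>"
| "bigconj (\<psi> # \<chi> # xs) = FAnd \<psi> (bigconj (\<chi> # xs))"

fun bigdisj :: "formula list \<Rightarrow> formula" where
  "bigdisj [] = fbot"
| "bigdisj xs = FNot (bigconj (map FNot xs))"

definition enum_set :: "'a set \<Rightarrow> 'a list" where
  "enum_set S = (SOME xs. set xs = S \<and> distinct xs)"

definition literal_conj :: "formula set \<Rightarrow> formula" where
  "literal_conj f = FAnd (bigconj (enum_set {\<alpha> \<in> f. atomic \<alpha>}))
                         (bigconj (map FNot (enum_set {\<alpha>. atomic \<alpha> \<and> FNot \<alpha> \<in> f})))"

definition dagger :: "formula \<Rightarrow> formula" where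
  "dagger \<phi> = bigdisj (map (\<lambda>(T, ob, f). literal_conj f) (enum_set (QM \<phi>)))"

end

theory Submission
  imports Defs
begin

lemma cext_sub: "wf_interp I \<Longrightarrow> cext I C \<subseteq> dom I"
  by (induction C) (auto simp: wf_interp_def)

lemma cext_cneg: "wf_interp I \<Longrightarrow> cext I (cneg C) = dom I - cext I C"
  by (cases C) (use cext_sub in auto)

lemma sat_fneg: "sat I (fneg \<psi>) = (\<not> sat I \<psi>)"
  by (cases \<psi>) auto

lemma sat_fnf: "sat I (fnf \<psi>) = sat I \<psi>"
  by (induction \<psi>) (auto simp: sat_fneg)

lemma sat_ftop: "wf_interp I \<Longrightarrow> sat I ftop"
  by (auto simp: ftop_def fbot_def wf_interp_def)

lemma sat_fbot: "wf_interp I \<Longrightarrow> \<not> sat I fbot"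
  by (auto simp: fbot_def wf_interp_def)

lemma sat_bigconj: "wf_interp I \<Longrightarrow> sat I (bigconj xs) = (\<forall>x\<in>set xs. sat I x)"
  by (induction xs rule: bigconj.induct) (auto simp: sat_ftop)

lemma sat_bigdisj: "wf_interp I \<Longrightarrow> sat I (bigdisj xs) = (\<exists>x\<in>set xs. sat I x)"
  by (cases xs) (auto simp: sat_fbot sat_bigconj simp del: bigconj.simps)

lemma enum_set: "finite S \<Longrightarrow> set (enum_set S) = S"
  unfolding enum_set_def by (metis (mono_tags, lifting) finite_distinct_list someI_ex)

fun isNot :: "formula \<Rightarrow> bool" where
  "isNot (FNot x) = True"
| "isNot _ = False"

fun nrm :: "formula \<Rightarrow> bool" where
  "nrm (FNot (FNot x)) = False"
| "nrm (FNot x) = nrm x"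
| "nrm (FAnd a b) = (nrm a \<and> nrm b)"
| "nrm _ = True"

lemma nrm_fneg: "nrm x \<Longrightarrow> nrm (fneg x)"
  by (induction x rule: nrm.induct) auto

lemma nrm_fnf: "nrm (fnf x)"
  by (induction x) (auto simp: nrm_fneg)

lemma self_Sub0: "\<not> isNot x \<Longrightarrow> x \<in> Sub0 x \<and> FNot x \<in> Sub0 x"
  by (cases x) auto

lemma nrm_Sub0: "nrm a \<Longrightarrow> a \<in> Sub0 a"
  by (induction a rule: nrm.induct) (auto dest: self_Sub0)

lemma fneg_Sub0: "\<psi> \<in> Sub0 n \<Longrightarrow> fneg \<psi> \<in> Sub0 n"
  by (induction n) auto

lemma shape_Sub0': "\<psi> \<in> Sub0 n \<Longrightarrow> \<not> isNot \<psi> \<or> (\<exists>\<alpha>. \<psi> = FNot \<alpha> \<and> \<not> isNot \<alpha>)"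
  by (induction n) auto

lemma shape_Sub0: "\<psi> \<in> Sub0 n \<Longrightarrow> \<exists>\<alpha>. \<not> isNot \<alpha> \<and> (\<psi> = \<alpha> \<or> \<psi> = FNot \<alpha>)"
  using shape_Sub0' by blast

lemma size_fneg: "size (fneg x) \<le> Suc (size x)"
  by (cases x) auto

lemma and_Sub0: "FAnd a b \<in> Sub0 n \<Longrightarrow> nrm n \<Longrightarrow> a \<in> Sub0 n \<and> b \<in> Sub0 n"
proof (induction n rule: nrm.induct)
  case (3 x y)
  then show ?case using nrm_Sub0 by auto
qed auto

lemma ind_Sub0: "\<psi> \<in> Sub0 n \<Longrightarrow> ind \<psi> \<subseteq> ind n"
  by (induction n) auto

lemma ind_fneg: "ind (fneg x) = ind x"
  by (cases x) auto

lemma ind_fnf: "ind (fnf x) = ind x"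
  by (induction x) (auto simp: ind_fneg)

lemma finite_Sub0: "finite (Sub0 n)"
  by (induction n) auto

lemma finite_ind: "finite (ind n)"
  by (induction n) auto

lemma fnf_in_Sub: "fnf \<phi> \<in> Sub \<phi>"
  unfolding Sub_def using nrm_Sub0 nrm_fnf by blast

section \<open>Finiteness of con\<close>

fun fconcs :: "formula \<Rightarrow> concept set" where
  "fconcs (CAss C a) = {C}"
| "fconcs (RAss r a b) = {}"
| "fconcs (CTop C) = {C}"
| "fconcs (FNot x) = fconcs x"
| "fconcs (FAnd a b) = fconcs a \<union> fconcs b"

fun subc :: "concept \<Rightarrow> concept set" where
  "subc (CName A) = {CName A}"
| "subc (CNot C) = insert (CNot C) (subc C)"
| "subc (CAnd C D) = insert (CAnd C D) (subc C \<union> subc D)"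
| "subc (CEx r C) = insert (CEx r C) (subc C)"

lemma subc_self: "C \<in> subc C"
  by (cases C) auto

lemma subc_trans: "x \<in> subc y \<Longrightarrow> subc x \<subseteq> subc y"
  by (induction y) auto

lemma finite_subc: "finite (subc C)"
  by (induction C) auto

lemma finite_fconcs: "finite (fconcs x)"
  by (induction x) auto

definition SC :: "formula \<Rightarrow> concept set" where
  "SC \<phi> = (\<Union>\<psi>\<in>Sub \<phi>. \<Union>C\<in>fconcs \<psi>. subc C)"

lemma finite_SC: "finite (SC \<phi>)"
  unfolding SC_def Sub_def using finite_Sub0 finite_subc finite_fconcs by auto

lemma SC_closed: "x \<in> SC \<phi> \<Longrightarrow> y \<in> subc x \<Longrightarrow> y \<in> SC \<phi>"
  unfolding SC_def using subc_trans by blast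

lemma con_SC: "C \<in> con \<phi> \<Longrightarrow> C \<in> SC \<phi> \<union> CNot ` SC \<phi>"
proof (induction rule: con.induct)
  case (con_top C)
  then show ?case unfolding SC_def using subc_self by fastforce
next
  case (con_ass C a)
  then show ?case unfolding SC_def using subc_self by fastforce
next
  case (con_and1 C D)
  then show ?case using SC_closed[of "CAnd C D" \<phi> C] subc_self by auto
next
  case (con_and2 C D)
  then show ?case using SC_closed[of "CAnd C D" \<phi> D] subc_self by auto
next
  case (con_ex r C)
  then show ?case using SC_closed[of "CEx r C" \<phi> C] subc_self by auto
next
  case (con_neg C)
  from con_neg.IH show ?case
  proof (elim UnE)
    assume a: "C \<in> SC \<phi>"
    show ?thesis
    proof (cases C)
      case (CNot D)
      then show ?thesis using a SC_closed[of C \<phi> D] subc_self by auto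
    qed (use a in auto)
  next
    assume "C \<in> CNot ` SC \<phi>"
    then show ?thesis by auto
  qed
qed

lemma finite_con: "finite (con \<phi>)"
proof -
  have "con \<phi> \<subseteq> SC \<phi> \<union> CNot ` SC \<phi>" using con_SC by blast
  then show ?thesis using finite_SC by (meson finite_Un finite_imageI finite_subset)
qed

lemma finite_QM: "finite (QM \<phi>)"
proof -
  let ?OB = "{ob. \<forall>x. (x \<in> ind \<phi> \<longrightarrow> ob x \<in> Pow (con \<phi>)) \<and> (x \<notin> ind \<phi> \<longrightarrow> ob x = {})}"
  have "finite ?OB"
    by (rule finite_set_of_finite_funs) (use finite_ind finite_con in auto)
  moreover have "QM \<phi> \<subseteq> Pow (Pow (con \<phi>)) \<times> ?OB \<times> Pow (Sub \<phi>)"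
    by (auto simp: QM_def quasimodel_def model_candidate_def concept_type_def formula_type_def)
  ultimately show ?thesis
    using finite_con finite_Sub0 unfolding Sub_def
    by (meson Pow_iff finite_Pow_iff finite_SigmaI finite_subset)
qed

lemma sat_literal_conj:
  assumes "wf_interp I" "finite f"
  shows "sat I (literal_conj f) \<longleftrightarrow>
    (\<forall>\<alpha>\<in>f. atomic \<alpha> \<longrightarrow> sat I \<alpha>) \<and> (\<forall>\<alpha>. atomic \<alpha> \<and> FNot \<alpha> \<in> f \<longrightarrow> \<not> sat I \<alpha>)"
proof -
  have f1: "finite {\<alpha> \<in> f. atomic \<alpha>}" using assms(2) by auto
  have "{\<alpha>. atomic \<alpha> \<and> FNot \<alpha> \<in> f} \<subseteq> FNot -` f" by auto
  then have f2: "finite {\<alpha>. atomic \<alpha> \<and> FNot \<alpha> \<in> f}"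
    using assms(2) finite_vimageI[of f FNot] by (meson finite_subset inj_def formula.inject(4))
  show ?thesis
    unfolding literal_conj_def using assms(1) f1 f2
    by (auto simp: sat_bigconj enum_set)
qed

lemma type_sat:
  assumes ft: "formula_type \<phi> f" and lits: "\<forall>\<alpha>\<in>f. atomic \<alpha> \<longrightarrow> sat I \<alpha>"
    "\<forall>\<alpha>. atomic \<alpha> \<and> FNot \<alpha> \<in> f \<longrightarrow> \<not> sat I \<alpha>"
  shows "\<psi> \<in> Sub \<phi> \<Longrightarrow> \<psi> \<in> f \<Longrightarrow> sat I \<psi>"
proof (induction \<psi> rule: measure_induct_rule[where f=size])
  case (less \<psi>)
  have nf: "nrm (fnf \<phi>)" by (rule nrm_fnf)
  from shape_Sub0[OF less.prems(1)[unfolded Sub_def]]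
  obtain \<alpha> where na: "\<not> isNot \<alpha>" and sh: "\<psi> = \<alpha> \<or> \<psi> = FNot \<alpha>" by blast
  have atm: "atomic \<alpha> \<Longrightarrow> sat I \<psi>"
  proof -
    assume at: "atomic \<alpha>"
    from sh show ?thesis
    proof
      assume "\<psi> = \<alpha>" then show ?thesis using lits(1) at less.prems(2) by blast
    next
      assume e: "\<psi> = FNot \<alpha>"
      then have "\<not> sat I \<alpha>" using lits(2) at less.prems(2) by blast
      then show ?thesis using e by simp
    qed
  qed
  show ?case
  proof (cases \<alpha>)
    case (FAnd a b)
    have aS: "a \<in> Sub \<phi>" "b \<in> Sub \<phi>"
      using and_Sub0[of a b "fnf \<phi>"] nf less.prems(1) fneg_Sub0[of \<psi> "fnf \<phi>"] sh FAnd
      unfolding Sub_def by auto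
    have AS: "FAnd a b \<in> Sub \<phi>"
      using less.prems(1) fneg_Sub0[of \<psi> "fnf \<phi>"] sh FAnd unfolding Sub_def by auto
    from sh show ?thesis
    proof
      assume "\<psi> = \<alpha>"
      then have "a \<in> f" "b \<in> f" using ft less.prems(2) AS FAnd by (auto simp: formula_type_def)
      then show ?thesis using less.IH aS \<open>\<psi> = \<alpha>\<close> FAnd by auto
    next
      assume p: "\<psi> = FNot \<alpha>"
      have "fneg \<psi> \<notin> f" using ft less.prems by (auto simp: formula_type_def)
      then have "FAnd a b \<notin> f" using p FAnd by simp
      then have "a \<notin> f \<or> b \<notin> f" using ft AS by (auto simp: formula_type_def)
      then have "fneg a \<in> f \<or> fneg b \<in> f" using ft aS by (auto simp: formula_type_def)
      moreover have "fneg a \<in> Sub \<phi>" "fneg b \<in> Sub \<phi>"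
        using aS fneg_Sub0 unfolding Sub_def by auto
      moreover have "size (fneg a) < size \<psi>" "size (fneg b) < size \<psi>"
        using p FAnd size_fneg[of a] size_fneg[of b] by auto
      ultimately have "sat I (fneg a) \<or> sat I (fneg b)" using less.IH by blast
      then show ?thesis using p FAnd by (auto simp: sat_fneg)
    qed
  next
    case (FNot x)
    then show ?thesis using na by simp
  qed (use atm in auto)
qed

lemma dagger_imp:
  assumes "wf_interp I" "quasimodel \<phi> T ob f" "sat I (literal_conj f)"
  shows "sat I \<phi>"
proof -
  have ft: "formula_type \<phi> f" and fin: "fnf \<phi> \<in> f"
    using assms(2) by (auto simp: quasimodel_def model_candidate_def)
  have "finite f" using ft finite_Sub0 unfolding formula_type_def Sub_def
    by (meson finite_subset)
  then have lits: "\<forall>\<alpha>\<in>f. atomic \<alpha> \<longrightarrow> sat I \<alpha>" "\<forall>\<alpha>. atomic \<alpha> \<and> FNot \<alpha> \<in> f \<longrightarrow> \<not> sat I \<alpha>"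
    using sat_literal_conj assms(1,3) by blast+
  have "sat I (fnf \<phi>)" using type_sat[OF ft lits fnf_in_Sub fin] .
  then show ?thesis by (simp add: sat_fnf)
qed

lemma sat_imp_QM:
  assumes wf: "wf_interp I" and s: "sat I \<phi>"
  shows "\<exists>T ob f. quasimodel \<phi> T ob f \<and> sat I (literal_conj f)"
proof -
  define tp where "tp d = {C \<in> con \<phi>. d \<in> cext I C}" for d
  define T where "T = tp ` dom I"
  define ob where "ob a = (if a \<in> ind \<phi> then tp (iint I a) else {})" for a
  define f where "f = {\<psi> \<in> Sub \<phi>. sat I \<psi>}"
  have cc: "cext I (cneg C) = dom I - cext I C" for C using cext_cneg[OF wf] .
  have cs: "cext I C \<subseteq> dom I" for C using cext_sub[OF wf] .
  have idom: "iint I a \<in> dom I" for a using wf by (auto simp: wf_interp_def)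
  have rdom: "(x, y) \<in> rint I r \<Longrightarrow> y \<in> dom I" for x y r using wf by (auto simp: wf_interp_def)
  have negcon: "C \<in> con \<phi> \<Longrightarrow> cneg C \<in> con \<phi>" for C by (rule con_neg)
  have ct: "concept_type \<phi> (tp d)" if "d \<in> dom I" for d
    unfolding concept_type_def
  proof (intro conjI allI impI ballI)
    show "tp d \<subseteq> con \<phi>" unfolding tp_def by blast
  next
    fix D assume D: "D \<in> con \<phi>"
    have "d \<in> cext I (cneg D) \<longleftrightarrow> d \<notin> cext I D" using cc that by blast
    then show "D \<in> tp d \<longleftrightarrow> cneg D \<notin> tp d" using D negcon[OF D] unfolding tp_def by blast
  next
    fix D E assume "CAnd D E \<in> con \<phi>"
    moreover have "D \<in> con \<phi>" "E \<in> con \<phi>" using calculation by (rule con_and1, rule con_and2)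
    ultimately show "CAnd D E \<in> tp d \<longleftrightarrow> D \<in> tp d \<and> E \<in> tp d" unfolding tp_def by simp
  qed
  have nfS: "\<psi> \<in> Sub \<phi> \<Longrightarrow> fneg \<psi> \<in> Sub \<phi>" for \<psi> unfolding Sub_def by (rule fneg_Sub0)
  have andS: "FAnd a b \<in> Sub \<phi> \<Longrightarrow> a \<in> Sub \<phi> \<and> b \<in> Sub \<phi>" for a b
    unfolding Sub_def using and_Sub0 nrm_fnf by blast
  have ftype: "formula_type \<phi> f"
    unfolding formula_type_def
  proof (intro conjI allI impI ballI)
    show "f \<subseteq> Sub \<phi>" unfolding f_def by blast
  next
    fix \<psi> assume p: "\<psi> \<in> Sub \<phi>"
    have "fneg \<psi> \<in> Sub \<phi>" using nfS[OF p] .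
    then show "\<psi> \<in> f \<longleftrightarrow> fneg \<psi> \<notin> f" using p unfolding f_def by (simp add: sat_fneg)
  next
    fix a b assume p: "FAnd a b \<in> Sub \<phi>"
    have "a \<in> Sub \<phi>" "b \<in> Sub \<phi>" using andS[OF p] by auto
    then show "FAnd a b \<in> f \<longleftrightarrow> a \<in> f \<and> b \<in> f" using p unfolding f_def by simp
  qed
  have indS: "\<psi> \<in> Sub \<phi> \<Longrightarrow> ind \<psi> \<subseteq> ind \<phi>" for \<psi>
    unfolding Sub_def using ind_Sub0 ind_fnf by blast
  have exneg: "CNot (CEx r C) \<in> con \<phi> \<Longrightarrow> cneg C \<in> con \<phi>" for r C
  proof -
    assume "CNot (CEx r C) \<in> con \<phi>"
    then have "CEx r C \<in> con \<phi>" using con_neg[of "CNot (CEx r C)" \<phi>] by simp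
    then show ?thesis by (rule con_neg[OF con_ex])
  qed
  have mc: "model_candidate \<phi> T ob f"
    unfolding model_candidate_def
  proof (intro conjI)
    show "\<forall>c\<in>T. concept_type \<phi> c" using ct T_def by auto
    show "\<forall>a\<in>ind \<phi>. ob a \<in> T" using ob_def T_def idom by auto
    show "\<forall>a. a \<notin> ind \<phi> \<longrightarrow> ob a = {}" using ob_def by auto
    show "formula_type \<phi> f" by (rule ftype)
    show "fnf \<phi> \<in> f" using f_def fnf_in_Sub s sat_fnf by auto
    show "\<forall>C a. CAss C a \<in> f \<longrightarrow> C \<in> ob a"
    proof (intro allI impI)
      fix C a assume c: "CAss C a \<in> f"
      then have "CAss C a \<in> Sub \<phi>" "sat I (CAss C a)" unfolding f_def by auto
      moreover then have "a \<in> ind \<phi>" using indS by fastforce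
      ultimately show "C \<in> ob a" unfolding ob_def tp_def using con_ass by auto
    qed
    show "\<forall>r a b. RAss r a b \<in> f \<longrightarrow> {cneg C |C. CNot (CEx r C) \<in> ob a} \<subseteq> ob b"
    proof (intro allI impI subsetI)
      fix r a b x
      assume r: "RAss r a b \<in> f" and x: "x \<in> {cneg C |C. CNot (CEx r C) \<in> ob a}"
      then obtain C where xc: "x = cneg C" and C: "CNot (CEx r C) \<in> ob a" by auto
      have ab: "a \<in> ind \<phi>" "b \<in> ind \<phi>" and rr: "(iint I a, iint I b) \<in> rint I r"
        using r indS[of "RAss r a b"] by (auto simp: f_def)
      have "CNot (CEx r C) \<in> con \<phi>" "iint I a \<notin> cext I (CEx r C)"
        using C ab by (auto simp: ob_def tp_def)
      then show "x \<in> ob b" using xc ab rr exneg idom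
        by (auto simp: ob_def tp_def cc)
    qed
  qed
  have qm: "quasimodel \<phi> T ob f"
    unfolding quasimodel_def
  proof (intro conjI)
    show "model_candidate \<phi> T ob f" by (rule mc)
    show "\<forall>c\<in>T. \<forall>r D. CEx r D \<in> c \<longrightarrow> (\<exists>c'\<in>T. {D} \<union> {cneg E |E. CNot (CEx r E) \<in> c} \<subseteq> c')"
    proof (intro ballI allI impI)
      fix c r D assume c: "c \<in> T" and e: "CEx r D \<in> c"
      then obtain d where d: "d \<in> dom I" "c = tp d" using T_def by auto
      then have "CEx r D \<in> con \<phi>" "d \<in> cext I (CEx r D)" using e by (auto simp: tp_def)
      then obtain y where y: "(d, y) \<in> rint I r" "y \<in> cext I D" "D \<in> con \<phi>"
        using con_ex[of r D \<phi>] by auto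
      have yd: "y \<in> dom I" using y rdom by blast
      have "{D} \<union> {cneg E |E. CNot (CEx r E) \<in> c} \<subseteq> tp y"
        using y yd d exneg by (auto simp: tp_def cc)
      then show "\<exists>c'\<in>T. {D} \<union> {cneg E |E. CNot (CEx r E) \<in> c} \<subseteq> c'"
        using yd T_def by auto
    qed
    show "\<forall>c\<in>T. \<forall>C. cneg C \<in> c \<longrightarrow> CTop C \<notin> f"
      by (auto simp: T_def tp_def f_def cc)
    show "\<forall>C. FNot (CTop C) \<in> f \<longrightarrow> (\<exists>c\<in>T. C \<notin> c)"
      using cs by (auto simp: T_def tp_def f_def)
    show "T \<noteq> {}" using wf by (auto simp: T_def wf_interp_def)
  qed
  have "finite f" unfolding f_def Sub_def using finite_Sub0 by auto
  then have "sat I (literal_conj f)"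
    using sat_literal_conj[OF wf] by (auto simp: f_def)
  then show ?thesis using qm by blast
qed

theorem mainTheorem3:
  fixes \<phi> :: formula and I :: "'d interp"
  assumes "wf_interp I"
  shows "sat I \<phi> \<longleftrightarrow> sat I (dagger \<phi>)"
proof -
  have "sat I (dagger \<phi>) \<longleftrightarrow> (\<exists>T ob f. quasimodel \<phi> T ob f \<and> sat I (literal_conj f))"
    unfolding dagger_def using assms finite_QM[of \<phi>]
    by (auto simp: sat_bigdisj enum_set QM_def)
  then show ?thesis using dagger_imp sat_imp_QM assms by blast
qed

end
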